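(* Let $q$ be a Boolean conjunctive query without self-join, let $F\in q$ with $\mathit{key}(F)=\emptyset$, and let $q'=q\setminus\{F\}$. Let $\vec{y}$ be a sequence of distinct variables with $\{\text{variables of }\vec{y}\}=\mathit{vars}(F)$. Let ${\mathbf{db}}$ be an uncertain database that is purified relative to $q$, and let $D$ be the active domain of ${\mathbf{db}}$. Then ${\mathbf{db}}\in\mathsf{CERTAINTY}(q)$ if and only if ${\mathbf{db}}\neq\emptyset$ and for all $\vec{b}\in D^{|\vec{y}|}$, if $F[\vec{y}\mapsto\vec{b}]\in{\mathbf{db}}$ then ${\mathbf{db}}\in\mathsf{CERTAINTY}(q'[\vec{y}\mapsto\vec{b}])$.
   Context: Relation names have signatures $[n,k]$ ($n\ge k\ge1$; arity $n$, primary key positions $1,\dots,k$). Atoms have variables or constants as arguments; a fact is an atom with only constants; facts are key-equal if they have the same relation name and agree on the primary key. $\mathit{key}(F)$ is the set of variables in the primary-key positions of atom $F$, $\mathit{vars}(F)$ its set of variables. An uncertain database is a finite set of facts; its active domain is the set of constants occurring in it; a repair is a maximal subset with no two distinct key-equal facts. A Boolean conjunctive query $q$ is a finite set of atoms (existentially closed conjunction) with variable set $\mathit{vars}(q)$; it has a self-join if a relation name occurs in two of its atoms. $\mathsf{CERTAINTY}(q)$ is the set of uncertain databases all of whose repairs satisfy $q$. For a sequence $\vec{y}=\langle y_1,\dots,y_\ell\rangle$ of distinct variables and constants $\vec{b}=\langle b_1,\dots,b_\ell\rangle$, $X[\vec{y}\mapsto\vec{b}]$ replaces each occurrence of $y_i$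 in $X$ by $b_i$. ${\mathbf{db}}$ is purified relative to $q$ if every fact $A\in{\mathbf{db}}$ satisfies $A\in\theta(q)\subseteq{\mathbf{db}}$ for some valuation $\theta$ over $\mathit{vars}(q)$. *)

theory Defs
  imports Main
begin

text \<open>Relation names carry their signature [n,k]: a relation name is a triple
  (name, n, k) with arity n and primary key positions 1..k.\<close>

type_synonym 'n rel = "'n \<times> nat \<times> nat"

definition arity :: "'n rel \<Rightarrow> nat" where "arity R = fst (snd R)"
definition keylen :: "'n rel \<Rightarrow> nat" where "keylen R = snd (snd R)"

datatype ('v, 'c) trm = Var 'v | Const 'c

datatype ('n, 'v, 'c) atom = Atom (relname: "'n rel") (args: "('v, 'c) trm list")

definition wf_atom :: "('n, 'v, 'c) atom \<Rightarrow> bool" where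
  "wf_atom A \<longleftrightarrow> 1 \<le> keylen (relname A) \<and> keylen (relname A) \<le> arity (relname A)
      \<and> length (args A) = arity (relname A)"

definition is_fact :: "('n, 'v, 'c) atom \<Rightarrow> bool" where
  "is_fact A \<longleftrightarrow> wf_atom A \<and> (\<forall>t \<in> set (args A). \<exists>c. t = Const c)"

definition key_equal :: "('n, 'v, 'c) atom \<Rightarrow> ('n, 'v, 'c) atom \<Rightarrow> bool" where
  "key_equal A B \<longleftrightarrow> relname A = relname B
      \<and> take (keylen (relname A)) (args A) = take (keylen (relname B)) (args B)"

definition vars_of_terms :: "('v, 'c) trm list \<Rightarrow> 'v set" where
  "vars_of_terms ts = {v. Var v \<in> set ts}"

definition avars :: "('n, 'v, 'c) atom \<Rightarrow> 'v set" where
  "avars A = vars_of_terms (args A)"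

definition key :: "('n, 'v, 'c) atom \<Rightarrow> 'v set" where
  "key A = vars_of_terms (take (keylen (relname A)) (args A))"

definition qvars :: "('n, 'v, 'c) atom set \<Rightarrow> 'v set" where
  "qvars q = (\<Union>A\<in>q. avars A)"

definition uncertain_db :: "('n, 'v, 'c) atom set \<Rightarrow> bool" where
  "uncertain_db db \<longleftrightarrow> finite db \<and> (\<forall>A\<in>db. is_fact A)"

definition adom :: "('n, 'v, 'c) atom set \<Rightarrow> 'c set" where
  "adom db = {c. \<exists>A\<in>db. Const c \<in> set (args A)}"

definition consistent :: "('n, 'v, 'c) atom set \<Rightarrow> bool" where
  "consistent r \<longleftrightarrow> (\<forall>A\<in>r. \<forall>B\<in>r. key_equal A B \<longrightarrow> A = B)"

definition is_repair :: "('n, 'v, 'c) atom set \<Rightarrow> ('n, 'v, 'c) atom set \<Rightarrow> bool" where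
  "is_repair r db \<longleftrightarrow> r \<subseteq> db \<and> consistent r
      \<and> (\<forall>s. r \<subset> s \<and> s \<subseteq> db \<longrightarrow> \<not> consistent s)"

definition is_bcq :: "('n, 'v, 'c) atom set \<Rightarrow> bool" where
  "is_bcq q \<longleftrightarrow> finite q \<and> (\<forall>A\<in>q. wf_atom A)"

definition self_join_free :: "('n, 'v, 'c) atom set \<Rightarrow> bool" where
  "self_join_free q \<longleftrightarrow> (\<forall>A\<in>q. \<forall>B\<in>q. relname A = relname B \<longrightarrow> A = B)"

fun val_trm :: "('v \<Rightarrow> 'c) \<Rightarrow> ('v, 'c) trm \<Rightarrow> ('v, 'c) trm" where
  "val_trm \<theta> (Var v) = Const (\<theta> v)"
| "val_trm \<theta> (Const c) = Const c"

definition val_atom :: "('v \<Rightarrow> 'c) \<Rightarrow> ('n, 'v, 'c) atom \<Rightarrow> ('n, 'v, 'c) atom" where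
  "val_atom \<theta> A = Atom (relname A) (map (val_trm \<theta>) (args A))"

definition val_query :: "('v \<Rightarrow> 'c) \<Rightarrow> ('n, 'v, 'c) atom set \<Rightarrow> ('n, 'v, 'c) atom set" where
  "val_query \<theta> q = val_atom \<theta> ` q"

definition satisfies :: "('n, 'v, 'c) atom set \<Rightarrow> ('n, 'v, 'c) atom set \<Rightarrow> bool" where
  "satisfies db q \<longleftrightarrow> (\<exists>\<theta>. val_query \<theta> q \<subseteq> db)"

definition CERTAINTY :: "('n, 'v, 'c) atom set \<Rightarrow> ('n, 'v, 'c) atom set set" where
  "CERTAINTY q = {db. uncertain_db db \<and> (\<forall>r. is_repair r db \<longrightarrow> satisfies r q)}"

definition purified :: "('n, 'v, 'c) atom set \<Rightarrow> ('n, 'v, 'c) atom set \<Rightarrow> bool" where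
  "purified db q \<longleftrightarrow> (\<forall>A\<in>db. \<exists>\<theta>. A \<in> val_query \<theta> q \<and> val_query \<theta> q \<subseteq> db)"

definition subst_trm :: "'v list \<Rightarrow> 'c list \<Rightarrow> ('v, 'c) trm \<Rightarrow> ('v, 'c) trm" where
  "subst_trm ys bs t = (case t of Var v \<Rightarrow>
      (case map_of (zip ys bs) v of Some c \<Rightarrow> Const c | None \<Rightarrow> Var v) | Const c \<Rightarrow> Const c)"

definition subst_atom :: "'v list \<Rightarrow> 'c list \<Rightarrow> ('n, 'v, 'c) atom \<Rightarrow> ('n, 'v, 'c) atom" where
  "subst_atom ys bs A = Atom (relname A) (map (subst_trm ys bs) (args A))"

definition subst_query :: "'v list \<Rightarrow> 'c list \<Rightarrow> ('n, 'v, 'c) atom set \<Rightarrow> ('n, 'v, 'c) atom set" where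
  "subst_query ys bs q = subst_atom ys bs ` q"

end

theory Submission
  imports Defs
begin

lemma val_subst:
  "val_atom \<theta> (subst_atom ys bs G) =
   val_atom (\<lambda>v. case map_of (zip ys bs) v of Some c \<Rightarrow> c | None \<Rightarrow> \<theta> v) G"
  unfolding val_atom_def subst_atom_def
  by (auto intro!: map_cong simp: subst_trm_def split: trm.split option.split)

lemma val_cong_vars:
  assumes "\<And>v. v \<in> avars G \<Longrightarrow> \<theta> v = \<sigma> v"
  shows "val_atom \<theta> G = val_atom \<sigma> G"
  unfolding val_atom_def
proof (intro arg_cong[where f="Atom (relname G)"] map_cong refl)
  fix t assume t: "t \<in> set (args G)"
  show "val_trm \<theta> t = val_trm \<sigma> t"
    apply (cases t) using assms t by (auto simp: avars_def vars_of_terms_def)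
qed

lemma subst_map_val:
  assumes "avars F \<subseteq> set ys"
  shows "subst_atom ys (map \<theta> ys) F = val_atom \<theta> F"
  unfolding val_atom_def subst_atom_def
proof (intro arg_cong[where f="Atom (relname F)"] map_cong refl)
  fix t assume t: "t \<in> set (args F)"
  show "subst_trm ys (map \<theta> ys) t = val_trm \<theta> t"
    apply (cases t) using assms t by (auto simp: avars_def vars_of_terms_def subst_trm_def map_of_zip_map)
qed

theorem lemma8:
  fixes q q' :: "('n, 'v, 'c) atom set" and F :: "('n, 'v, 'c) atom"
    and ys :: "'v list" and db :: "('n, 'v, 'c) atom set"
  assumes "is_bcq q" and "self_join_free q"
    and "F \<in> q" and "key F = {}" and "q' = q - {F}"
    and "distinct ys" and "set ys = avars F"
    and "uncertain_db db" and "purified db q"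
  shows "db \<in> CERTAINTY q \<longleftrightarrow>
    db \<noteq> {} \<and>
    (\<forall>bs. length bs = length ys \<and> set bs \<subseteq> adom db \<longrightarrow>
        subst_atom ys bs F \<in> db \<longrightarrow> db \<in> CERTAINTY (subst_query ys bs q'))"
proof -
  note sjf = assms(2)[unfolded self_join_free_def]
  define R where "R = relname F"
  have Rinst: "\<exists>\<theta>. A = val_atom \<theta> F" if "A \<in> db" "relname A = R" for A
  proof -
    have "\<exists>\<theta>. A \<in> val_query \<theta> q \<and> val_query \<theta> q \<subseteq> db"
      using assms(9) that(1) unfolding purified_def by (rule bspec)
    then obtain \<theta> where "A \<in> val_query \<theta> q" by (elim exE conjE)
    then obtain G where G: "G \<in> q" "A = val_atom \<theta> G" unfolding val_query_def by (rule imageE)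
    have "relname A = relname G" using G(2) by (simp add: val_atom_def)
    then have "relname G = relname F" using that(2) by (simp add: R_def)
    then have "G = F" using sjf[rule_format, OF G(1) assms(3)] by simp
    then show ?thesis using G(2) by (rule_tac x=\<theta> in exI) simp
  qed
  have keyconst: "take (keylen R) (args (val_atom \<theta> F)) = take (keylen R) (args F)" for \<theta>
  proof -
    have "map (val_trm \<theta>) (take (keylen R) (args F)) = take (keylen R) (args F)"
    proof (rule map_idI)
      fix t assume t: "t \<in> set (take (keylen R) (args F))"
      show "val_trm \<theta> t = t"
      proof (cases t)
        case (Var v)
        then have "v \<in> key F" using t by (simp add: key_def vars_of_terms_def R_def)
        then show ?thesis using assms(4) by simp
      qed simp
    qed
    then show ?thesis by (simp add: val_atom_def take_map)
  qed
  have Rkey: "key_equal A B" if h: "A \<in> db" "B \<in> db" "relname A = R" "relname B = R" for A B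
  proof -
    obtain \<theta>1 where 1: "A = val_atom \<theta>1 F" using Rinst h by blast
    obtain \<theta>2 where 2: "B = val_atom \<theta>2 F" using Rinst h by blast
    show ?thesis using keyconst[of \<theta>1] keyconst[of \<theta>2] h 1 2 by (simp add: key_equal_def)
  qed
  have keR: "relname A = relname B" if "key_equal A B" for A B :: "('n, 'v, 'c) atom"
    using that by (simp add: key_equal_def)
  have memR: "\<exists>A'\<in>r. relname A' = R" if r: "is_repair r db" and A: "A \<in> db" "relname A = R" for r A
  proof (rule ccontr)
    assume nr: "\<not> (\<exists>A'\<in>r. relname A' = R)"
    then have "A \<notin> r" using A by blast
    moreover have "consistent (insert A r)"
      unfolding consistent_def
    proof (intro ballI impI)
      fix a b assume a: "a \<in> insert A r" and b: "b \<in> insert A r" and ke: "key_equal a b"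
      have rn: "relname a = relname b" using keR[OF ke] .
      have cr: "consistent r" using r by (simp add: is_repair_def)
      show "a = b"
      proof (cases "a = A \<or> b = A")
        case True
        then have "a = A \<and> b = A" using rn nr a b A(2) by auto
        then show ?thesis by simp
      next
        case False
        then show ?thesis using a b cr ke unfolding consistent_def by simp
      qed
    qed
    ultimately show False using r A unfolding is_repair_def by blast
  qed
  show ?thesis
  proof
    assume C: "db \<in> CERTAINTY q"
    have "db \<noteq> {}"
    proof
      assume "db = {}"
      then have "is_repair {} db" by (auto simp: is_repair_def consistent_def)
      then have "satisfies {} q" using C by (simp add: CERTAINTY_def)
      then show False using assms(3) by (auto simp: satisfies_def val_query_def)
    qed
    moreover have "\<forall>bs. length bs = length ys \<and> set bs \<subseteq> adom db \<longrightarrow>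
        subst_atom ys bs F \<in> db \<longrightarrow> db \<in> CERTAINTY (subst_query ys bs q')"
    proof (intro allI impI)
      fix bs assume len: "length bs = length ys \<and> set bs \<subseteq> adom db"
        and Adb: "subst_atom ys bs F \<in> db"
      define A where "A = subst_atom ys bs F"
      have AR: "relname A = R" by (simp add: A_def subst_atom_def R_def)
      show "db \<in> CERTAINTY (subst_query ys bs q')"
        unfolding CERTAINTY_def
      proof (intro CollectI conjI allI impI)
        show "uncertain_db db" by fact
        fix r assume r: "is_repair r db"
        define r' where "r' = {x\<in>r. relname x \<noteq> R} \<union> {A}"
        have r'db: "r' \<subseteq> db" using r Adb by (auto simp: r'_def A_def is_repair_def)
        have cr: "consistent r" using r by (simp add: is_repair_def)
        have cr': "consistent r'"
          unfolding consistent_def r'_def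
        proof (intro ballI impI)
          fix a b assume a: "a \<in> {x \<in> r. relname x \<noteq> R} \<union> {A}" and b: "b \<in> {x \<in> r. relname x \<noteq> R} \<union> {A}" and ke: "key_equal a b"
          have rn: "relname a = relname b" using keR[OF ke] .
          show "a = b"
          proof (cases "a = A \<or> b = A")
            case True
            then have "a = A \<and> b = A" using rn AR a b by auto
            then show ?thesis by simp
          next
            case False
            then show ?thesis using a b cr ke unfolding consistent_def by simp
          qed
        qed
        have max: "\<not> consistent s" if s: "r' \<subset> s" "s \<subseteq> db" for s
        proof
          assume cs: "consistent s"
          obtain x where x: "x \<in> s" "x \<notin> r'" using s by blast
          show False
          proof (cases "relname x = R")
            case True
            then have "key_equal x A" using Rkey[of x A] x True s Adb AR A_def by blast
            then have "x = A" using cs x s unfolding consistent_def r'_def by blast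
            then show ?thesis using x by (simp add: r'_def)
          next
            case False
            then have xr: "x \<notin> r" using x by (simp add: r'_def)
            have "consistent (insert x r)"
              unfolding consistent_def
            proof (intro ballI impI)
              fix a b assume a: "a \<in> insert x r" and b: "b \<in> insert x r" and ke: "key_equal a b"
              have "relname a = relname b" using keR ke by blast
              show "a = b"
              proof (cases "a = x \<or> b = x")
                case True
                then have "relname a \<noteq> R \<and> relname b \<noteq> R" using False \<open>relname a = relname b\<close> by auto
                then have "a \<in> s" "b \<in> s" using a b x s by (auto simp: r'_def)
                then show ?thesis using cs ke unfolding consistent_def by blast
              next
                case False
                then show ?thesis using a b cr ke unfolding consistent_def by blast
              qed
            qed
            moreover have "x \<in> db" using x s by blast
            ultimately show False using r xr unfolding is_repair_def by blast
          qed
        qed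
        have "is_repair r' db" using r'db cr' max by (simp add: is_repair_def)
        then have "satisfies r' q" using C by (simp add: CERTAINTY_def)
        then obtain \<theta> where th: "val_query \<theta> q \<subseteq> r'" by (auto simp: satisfies_def)
        have "val_atom \<theta> F \<in> r'" using th assms(3) by (auto simp: val_query_def)
        moreover have "relname (val_atom \<theta> F) = R" by (simp add: val_atom_def R_def)
        ultimately have thF: "val_atom \<theta> F = A" by (auto simp: r'_def)
        have thbs: "\<theta> v = c" if "map_of (zip ys bs) v = Some c" for v c
        proof -
          have "v \<in> set ys" using that by (metis map_of_SomeD set_zip_leftD)
          then have "Var v \<in> set (args F)" using assms(7) by (simp add: avars_def vars_of_terms_def)
          moreover have "map (val_trm \<theta>) (args F) = map (subst_trm ys bs) (args F)"
            using thF by (simp add: A_def val_atom_def subst_atom_def)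
          ultimately have "val_trm \<theta> (Var v) = subst_trm ys bs (Var v)"
            by (metis map_eq_conv)
          then show ?thesis using that by (simp add: subst_trm_def)
        qed
        have eqf: "(\<lambda>v. case map_of (zip ys bs) v of Some c \<Rightarrow> c | None \<Rightarrow> \<theta> v) = \<theta>"
          by (rule ext) (auto simp: thbs split: option.split)
        have "val_query \<theta> (subst_query ys bs q') \<subseteq> r"
        proof
          fix x assume "x \<in> val_query \<theta> (subst_query ys bs q')"
          then obtain G where G: "G \<in> q'" "x = val_atom \<theta> (subst_atom ys bs G)"
            by (auto simp: val_query_def subst_query_def)
          then have xG: "x = val_atom \<theta> G" using val_subst[of \<theta> ys bs G] eqf by simp
          have "G \<in> q" "G \<noteq> F" using G assms(5) by auto
          then have "relname G \<noteq> R" using sjf assms(3) R_def by blast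
          moreover have "x \<in> r'" using th xG \<open>G \<in> q\<close> by (auto simp: val_query_def)
          moreover have "relname x = relname G" using xG by (simp add: val_atom_def)
          ultimately have "x \<in> r'" "relname x \<noteq> R" by auto
          then show "x \<in> r" using AR unfolding r'_def by auto
        qed
        then show "satisfies r (subst_query ys bs q')" by (auto simp: satisfies_def)
      qed
    qed
    ultimately show "db \<noteq> {} \<and> (\<forall>bs. length bs = length ys \<and> set bs \<subseteq> adom db \<longrightarrow>
        subst_atom ys bs F \<in> db \<longrightarrow> db \<in> CERTAINTY (subst_query ys bs q'))" by blast
  next
    assume H: "db \<noteq> {} \<and> (\<forall>bs. length bs = length ys \<and> set bs \<subseteq> adom db \<longrightarrow>
        subst_atom ys bs F \<in> db \<longrightarrow> db \<in> CERTAINTY (subst_query ys bs q'))"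
    show "db \<in> CERTAINTY q"
      unfolding CERTAINTY_def
    proof (intro CollectI conjI allI impI)
      show "uncertain_db db" by fact
      fix r assume r: "is_repair r db"
      obtain B where "B \<in> db" using H by blast
      then obtain \<theta>0 where "val_query \<theta>0 q \<subseteq> db" using assms(9) unfolding purified_def by blast
      then have "val_atom \<theta>0 F \<in> db" using assms(3) by (auto simp: val_query_def)
      moreover have "relname (val_atom \<theta>0 F) = R" by (simp add: val_atom_def R_def)
      ultimately have "\<exists>A'\<in>r. relname A' = R" using memR[OF r] by blast
      then obtain A where A: "A \<in> r" "relname A = R" by blast
      then have "A \<in> db" using r by (auto simp: is_repair_def)
      then obtain \<theta> where thA: "A = val_atom \<theta> F" using Rinst A by blast
      define bs where "bs = map \<theta> ys"
      have sA: "subst_atom ys bs F = A" unfolding bs_def using subst_map_val[of F ys \<theta>] assms(7) thA by simp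
      have "set bs \<subseteq> adom db"
      proof
        fix c assume "c \<in> set bs"
        then obtain y where y: "y \<in> set ys" "c = \<theta> y" by (auto simp: bs_def)
        then have "Var y \<in> set (args F)" using assms(7) by (simp add: avars_def vars_of_terms_def)
        then have "Const c \<in> set (args A)" using thA y by (force simp: val_atom_def)
        then show "c \<in> adom db" using \<open>A \<in> db\<close> by (auto simp: adom_def)
      qed
      then have "db \<in> CERTAINTY (subst_query ys bs q')"
        using H sA \<open>A \<in> db\<close> by (simp add: bs_def)
      then have "satisfies r (subst_query ys bs q')" using r by (simp add: CERTAINTY_def)
      then obtain \<sigma> where sg: "val_query \<sigma> (subst_query ys bs q') \<subseteq> r" by (auto simp: satisfies_def)
      define \<theta>' where "\<theta>' = (\<lambda>v. if v \<in> set ys then \<theta> v else \<sigma> v)"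
      have eqf: "(\<lambda>v. case map_of (zip ys bs) v of Some c \<Rightarrow> c | None \<Rightarrow> \<sigma> v) = \<theta>'"
        by (rule ext) (simp add: bs_def map_of_zip_map \<theta>'_def)
      have "val_query \<theta>' q \<subseteq> r"
      proof
        fix x assume "x \<in> val_query \<theta>' q"
        then obtain G where G: "G \<in> q" "x = val_atom \<theta>' G" by (auto simp: val_query_def)
        show "x \<in> r"
        proof (cases "G = F")
          case True
          have "val_atom \<theta>' F = val_atom \<theta> F"
            by (rule val_cong_vars) (use assms(7) in \<open>auto simp: \<theta>'_def\<close>)
          then show ?thesis using True G thA A by simp
        next
          case False
          then have "G \<in> q'" using G assms(5) by simp
          then have "val_atom \<sigma> (subst_atom ys bs G) \<in> r" using sg
            by (auto simp: val_query_def subst_query_def)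
          then show ?thesis using G val_subst[of \<sigma> ys bs G] eqf by simp
        qed
      qed
      then show "satisfies r q" by (auto simp: satisfies_def)
    qed
  qed
qed

end
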